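(* Let $\lambda \geq 0$, $0\leq \beta<1$ and $m \in \mathbb{N}$. Let $f(z)=z+\sum_{k=1}^{\infty} a_{mk+1}z^{mk+1}$ belong to $\Theta_{\Sigma_m}(1,\lambda,0,0;\beta)$ (the case $\tau=1$, $\gamma=\delta=0$). Then $$|a_{m+1}| \leq \min\left\{\frac{2(1-\beta)}{1+m\lambda},\ 2\sqrt{\frac{1-\beta}{(m+1)(1+2m\lambda)}}\right\}\quad\text{and}\quad |a_{2m+1}| \leq \frac{2(1-\beta)}{1+2m\lambda}.$$
   Context: Let $\mathbb{U}=\{z\in\mathbb{C}:|z|<1\}$ and $m\in\mathbb{N}$. $\mathcal{A}_m$ denotes the class of functions analytic in $\mathbb{U}$ of the form $f(z)=z+\sum_{k=1}^{\infty}a_{mk+1}z^{mk+1}$. $\Sigma_m$ denotes the class of $m$-fold symmetric bi-univalent functions: functions $f\in\mathcal{A}_m$ univalent in $\mathbb{U}$ whose inverse $f^{-1}$ extends to a univalent function $g$ on $\mathbb{U}$; this $g$ has the expansion $g(w)=w-a_{m+1}w^{m+1}+\left[(m+1)a_{m+1}^2-a_{2m+1}\right]w^{2m+1}-\cdots$. For $\delta\in\mathbb{N}_0$ and $h(z)=z+\sum_{k\ge1}c_{mk+1}z^{mk+1}$ analytic in $\mathbb{U}$, the $m$-fold Ruscheweyh derivative is $\mathcal{R}^\delta h(z)=z+\sum_{k=1}^{\infty}\frac{\Gamma(\delta+k+1)}{\Gamma(k+1)\Gamma(\delta+1)}c_{mk+1}z^{mk+1}$ (for $\delta=0$ it is the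 identity). For such $h$ and parameters $\lambda,\gamma,\tau\neq0,\delta$, put $$J_h(z)=1+\frac{1}{\tau}\Big[(1-\lambda)(1-\gamma)\frac{\mathcal{R}^\delta h(z)}{z}+(\lambda(\gamma+1)+\gamma)(\mathcal{R}^\delta h)'(z)+\lambda\gamma\big(z(\mathcal{R}^\delta h)''(z)-2\big)-1\Big].$$ For $0\le\beta<1$, $\Theta_{\Sigma_m}(\tau,\lambda,\gamma,\delta;\beta)$ is the set of $f\in\Sigma_m$ such that $\operatorname{Re}J_f(z)>\beta$ for all $z\in\mathbb{U}$ and $\operatorname{Re}J_g(w)>\beta$ for all $w\in\mathbb{U}$, where $g$ is the extension of $f^{-1}$ to $\mathbb{U}$. *)

theory Defs
  imports "HOL-Complex_Analysis.Complex_Analysis"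
begin

definition tcoeff :: "(complex \<Rightarrow> complex) \<Rightarrow> nat \<Rightarrow> complex" where
  "tcoeff h n = (deriv ^^ n) h 0 / of_nat (fact n)"

text \<open>The class A_m: analytic in U, normalised, with only powers z^(mk+1) occurring.\<close>
definition A_m :: "nat \<Rightarrow> (complex \<Rightarrow> complex) set" where
  "A_m m = {f. f holomorphic_on ball 0 1 \<and> tcoeff f 0 = 0 \<and> tcoeff f 1 = 1 \<and>
               (\<forall>n. n mod m \<noteq> 1 mod m \<longrightarrow> tcoeff f n = 0)}"

definition inv_extension :: "(complex \<Rightarrow> complex) \<Rightarrow> (complex \<Rightarrow> complex) \<Rightarrow> bool" where
  "inv_extension f g \<longleftrightarrow> g holomorphic_on ball 0 1 \<and> inj_on g (ball 0 1) \<and>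
     (\<forall>z\<in>ball 0 1. f z \<in> ball 0 1 \<longrightarrow> g (f z) = z)"

definition Sigma_m :: "nat \<Rightarrow> (complex \<Rightarrow> complex) set" where
  "Sigma_m m = {f. f \<in> A_m m \<and> inj_on f (ball 0 1) \<and> (\<exists>g. inv_extension f g)}"

definition ruscheweyh :: "nat \<Rightarrow> nat \<Rightarrow> (complex \<Rightarrow> complex) \<Rightarrow> complex \<Rightarrow> complex" where
  "ruscheweyh m del h z = z + (\<Sum>k. of_nat ((del + Suc k) choose Suc k) * tcoeff h (m * Suc k + 1)
                                  * z ^ (m * Suc k + 1))"

text \<open>q(z) = F(z)/z, with its removable-singularity value F'(0) at z = 0.\<close>
definition divz :: "(complex \<Rightarrow> complex) \<Rightarrow> complex \<Rightarrow> complex" where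
  "divz F z = (if z = 0 then deriv F 0 else F z / z)"

definition J :: "nat \<Rightarrow> complex \<Rightarrow> real \<Rightarrow> real \<Rightarrow> nat \<Rightarrow> (complex \<Rightarrow> complex) \<Rightarrow> complex \<Rightarrow> complex" where
  "J m tau lam gam del h z =
     (let R = ruscheweyh m del h in
      1 + (1 / tau) * ((1 - of_real lam) * (1 - of_real gam) * divz R z
                     + of_real (lam * (gam + 1) + gam) * deriv R z
                     + of_real (lam * gam) * (z * deriv (deriv R) z - 2) - 1))"

definition Theta :: "nat \<Rightarrow> complex \<Rightarrow> real \<Rightarrow> real \<Rightarrow> nat \<Rightarrow> real \<Rightarrow> (complex \<Rightarrow> complex) set" where
  "Theta m tau lam gam del beta = {f. f \<in> Sigma_m m \<and>
      (\<forall>z\<in>ball 0 1. Re (J m tau lam gam del f z) > beta) \<and>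
      (\<forall>g. inv_extension f g \<longrightarrow> (\<forall>w\<in>ball 0 1. Re (J m tau lam gam del g w) > beta))}"

end

theory Submission
  imports Defs
begin

lemma circ0: "circlepath 0 r t = complex_of_real r * exp (2 * of_real pi * \<i> * of_real t)"
  by (simp add: circlepath_def part_circlepath_def linepath_def algebra_simps)

lemma carath_r:
  fixes q :: "complex \<Rightarrow> complex"
  assumes hol: "q holomorphic_on ball 0 1" and pos: "\<And>z. z \<in> ball 0 1 \<Longrightarrow> Re (q z) > 0"
    and n: "n \<ge> 1" and r: "0 < r" "r < 1"
  shows "norm ((deriv ^^ n) q 0 / fact n) * r^n \<le> 2 * Re (q 0)"
proof -
  define e where "e = (\<lambda>t::real. exp (2 * of_real pi * \<i> * of_real t))"
  define c where "c = (deriv ^^ n) q 0 / fact n"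
  have ne: "norm (e t) = 1" for t unfolding e_def by (simp add: norm_exp_eq_Re)
  have cnje: "cnj (e t) = inverse (e t)" for t
    unfolding e_def by (simp add: exp_cnj exp_minus[symmetric])
  have ce: "circlepath 0 r t = of_real r * e t" for t unfolding e_def circ0 ..
  have e0: "e t \<noteq> 0" for t unfolding e_def by simp
  have sub: "cball 0 r \<subseteq> ball (0::complex) 1" using r by auto
  have cont: "continuous_on (cball 0 r) q"
    using holomorphic_on_imp_continuous_on[OF hol] sub continuous_on_subset by blast
  have holr: "q holomorphic_on ball 0 r"
    using hol sub holomorphic_on_subset by (meson ball_subset_cball subset_trans)
  have vd: "\<And>t. t \<in> {0..1} \<Longrightarrow> vector_derivative (circlepath 0 r) (at t within {0..1}) = 2 * of_real pi * \<i> * of_real r * e t"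
    unfolding e_def by (subst vector_derivative_circlepath01) auto
  have I1: "((\<lambda>u. q u / (u - 0) ^ Suc n) has_contour_integral complex_of_real (2 * pi) * \<i> / fact n * (deriv ^^ n) q 0) (circlepath 0 r)"
    by (rule Cauchy_has_contour_integral_higher_derivative_circlepath[OF cont holr]) (use r in auto)
  have I0: "((\<lambda>u. q u / (u - 0) ^ Suc 0) has_contour_integral complex_of_real (2 * pi) * \<i> / fact 0 * (deriv ^^ 0) q 0) (circlepath 0 r)"
    by (rule Cauchy_has_contour_integral_higher_derivative_circlepath[OF cont holr]) (use r in auto)
  have I2: "((\<lambda>u. q u * u ^ (n - 1)) has_contour_integral 0) (circlepath 0 r)"
    apply (rule Cauchy_theorem_convex_simple[where S="ball 0 1"])
    using hol r by (auto intro!: holomorphic_intros simp: path_image_circlepath)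
  have A1: "((\<lambda>t. q (of_real r * e t) * cnj (e t) ^ n) has_integral (of_real (r^n) * c)) {0..1}"
  proof -
    have "((\<lambda>t. (of_real (r^n) / (2 * of_real pi * \<i>)) * (q (circlepath 0 r t) / (circlepath 0 r t - 0) ^ Suc n * vector_derivative (circlepath 0 r) (at t within {0..1})))
       has_integral (of_real (r^n) / (2 * of_real pi * \<i>)) * (complex_of_real (2 * pi) * \<i> / fact n * (deriv ^^ n) q 0)) {0..1}"
      using I1 unfolding has_contour_integral_def by (rule has_integral_mult_right)
    then show ?thesis
    proof (rule has_integral_eq_rhs[OF has_integral_eq[rotated]], goal_cases)
      case (1 t)
      then show ?case using e0[of t] r pi_gt_zero
        by (simp add: vd ce cnje field_simps power_inverse)
    next
      case 2
      then show ?case using pi_gt_zero by (simp add: c_def field_simps)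
    qed
  qed
  have A0: "((\<lambda>t. q (of_real r * e t)) has_integral q 0) {0..1}"
  proof -
    have "((\<lambda>t. (1 / (2 * of_real pi * \<i>)) * (q (circlepath 0 r t) / (circlepath 0 r t - 0) ^ Suc 0 * vector_derivative (circlepath 0 r) (at t within {0..1})))
       has_integral (1 / (2 * of_real pi * \<i>)) * (complex_of_real (2 * pi) * \<i> / fact 0 * (deriv ^^ 0) q 0)) {0..1}"
      using I0 unfolding has_contour_integral_def by (rule has_integral_mult_right)
    then show ?thesis
    proof (rule has_integral_eq_rhs[OF has_integral_eq[rotated]], goal_cases)
      case (1 t)
      then show ?case using e0[of t] r pi_gt_zero
        by (simp add: vd ce field_simps)
    next
      case 2
      then show ?case using pi_gt_zero by (simp add: field_simps)
    qed
  qed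
  have A2: "((\<lambda>t. q (of_real r * e t) * e t ^ n) has_integral 0) {0..1}"
  proof -
    have "((\<lambda>t. (1 / (2 * of_real pi * \<i> * of_real (r^n))) * (q (circlepath 0 r t) * (circlepath 0 r t) ^ (n - 1) * vector_derivative (circlepath 0 r) (at t within {0..1})))
       has_integral (1 / (2 * of_real pi * \<i> * of_real (r^n))) * 0) {0..1}"
      using I2 unfolding has_contour_integral_def by (rule has_integral_mult_right)
    then show ?thesis
    proof (rule has_integral_eq_rhs[OF has_integral_eq[rotated]], goal_cases)
      case (1 t)
      obtain k where k: "n = Suc k" using n by (cases n) auto
      show ?case using e0[of t] r pi_gt_zero 1
        by (simp add: vd ce k field_simps power_mult_distrib)
    next
      case 2
      then show ?case by simp
    qed
  qed
  have A2c: "((\<lambda>t. cnj (q (of_real r * e t)) * cnj (e t) ^ n) has_integral 0) {0..1}"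
  proof -
    have "(cnj \<circ> (\<lambda>t. q (of_real r * e t) * e t ^ n) has_integral cnj 0) {0..1}"
      using A2 by (subst has_integral_cnj)
    then show ?thesis by (simp add: o_def)
  qed
  have S: "((\<lambda>t. of_real (2 * Re (q (of_real r * e t))) * cnj (e t) ^ n) has_integral (of_real (r^n) * c)) {0..1}"
  proof (rule has_integral_eq_rhs[OF has_integral_eq[OF _ has_integral_add[OF A1 A2c]]], goal_cases)
    case (1 t)
    show ?case by (simp only: complex_add_cnj[symmetric] distrib_right)
  qed simp
  have R0: "((\<lambda>t. 2 * Re (q (of_real r * e t))) has_integral 2 * Re (q 0)) {0..1}"
    using has_integral_mult_right[OF has_integral_linear[OF A0 bounded_linear_Re], of 2]
    by (simp add: o_def)
  have "norm (of_real (r^n) * c) \<le> (2 * Re (q 0)) \<bullet> 1"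
  proof (rule has_integral_norm_bound_integral_component[OF S R0])
    fix t :: real assume "t \<in> {0..1}"
    have "of_real r * e t \<in> ball 0 1" using r by (simp add: norm_mult ne)
    then have "Re (q (of_real r * e t)) > 0" by (rule pos)
    then show "norm (of_real (2 * Re (q (of_real r * e t))) * cnj (e t) ^ n) \<le> (2 * Re (q (of_real r * e t))) \<bullet> 1"
      by (simp add: norm_mult norm_power ne)
  qed
  moreover have "norm (of_real (r^n) * c) = norm c * r^n" using r by (simp add: norm_mult norm_power)
  ultimately show ?thesis by (simp add: c_def)
qed

lemma carath:
  fixes q :: "complex \<Rightarrow> complex"
  assumes hol: "q holomorphic_on ball 0 1" and pos: "\<And>z. z \<in> ball 0 1 \<Longrightarrow> Re (q z) > 0"
    and n: "n \<ge> 1"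
  shows "norm ((deriv ^^ n) q 0 / fact n) \<le> 2 * Re (q 0)"
proof -
  let ?x = "norm ((deriv ^^ n) q 0 / fact n)"
  have "((\<lambda>r. ?x * r ^ n) \<longlongrightarrow> ?x * 1 ^ n) (at_left 1)"
    by (intro tendsto_intros)
  moreover have "eventually (\<lambda>r. r \<in> {0<..<1}) (at_left (1::real))"
    by (rule eventually_at_left_real) simp
  then have "eventually (\<lambda>r. ?x * r ^ n \<le> 2 * Re (q 0)) (at_left (1::real))"
    by eventually_elim (use carath_r[OF hol pos n] in auto)
  ultimately have "?x * 1 ^ n \<le> 2 * Re (q 0)"
    by (intro tendsto_le[OF _ tendsto_const]) auto
  then show ?thesis by simp
qed

definition Eprime :: "nat \<Rightarrow> (complex \<Rightarrow> complex) \<Rightarrow> complex fps" where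
  "Eprime m h = Abs_fps (\<lambda>n. if (\<exists>k. n = m * Suc k + 1) then tcoeff h n else 0)"

definition Ep :: "nat \<Rightarrow> (complex \<Rightarrow> complex) \<Rightarrow> complex fps" where
  "Ep m h = fps_X + Eprime m h"

lemma Eprime_radius:
  assumes hol: "h holomorphic_on ball 0 1"
  shows "fps_conv_radius (Eprime m h) \<ge> 1"
proof -
  have "h holomorphic_on eball 0 (ereal 1)" using hol by simp
  then have R: "ereal 1 \<le> fps_conv_radius (fps_expansion h 0)" by (rule conv_radius_fps_expansion)
  have "conv_radius (fps_nth (Eprime m h)) \<ge> ereal 1"
  proof (rule conv_radius_geI_ex')
    fix r :: real assume r: "0 < r" "ereal r < ereal 1"
    have "ereal (norm (of_real r :: complex)) < fps_conv_radius (fps_expansion h 0)"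
    proof -
      have "ereal r < fps_conv_radius (fps_expansion h 0)" using r(2) R by (rule order.strict_trans2)
      then show ?thesis using r by simp
    qed
    then have s: "summable (\<lambda>n. norm (fps_nth (fps_expansion h 0) n * of_real r ^ n))"
      unfolding fps_conv_radius_def by (rule abs_summable_in_conv_radius)
    show "summable (\<lambda>n. fps_nth (Eprime m h) n * of_real r ^ n)"
    proof (rule summable_norm_cancel, rule summable_comparison_test[OF _ s])
      show "\<exists>N. \<forall>n\<ge>N. norm (norm (Eprime m h $ n * complex_of_real r ^ n)) \<le> norm (fps_expansion h 0 $ n * complex_of_real r ^ n)"
      proof (intro exI[of _ 0] allI impI)
        fix n :: nat
        have "Eprime m h $ n = fps_expansion h 0 $ n \<or> Eprime m h $ n = 0"
          by (simp add: Eprime_def fps_expansion_def tcoeff_def)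
        then show "norm (norm (Eprime m h $ n * complex_of_real r ^ n)) \<le> norm (fps_expansion h 0 $ n * complex_of_real r ^ n)"
          by auto
      qed
    qed
  qed
  then show ?thesis by (simp add: fps_conv_radius_def one_ereal_def)
qed

lemma Ep_radius:
  assumes hol: "h holomorphic_on ball 0 1"
  shows "fps_conv_radius (Ep m h) \<ge> 1"
proof -
  have "min (fps_conv_radius fps_X) (fps_conv_radius (Eprime m h)) \<ge> 1"
    using Eprime_radius[OF hol] by simp
  then show ?thesis unfolding Ep_def using fps_conv_radius_add order.trans by blast
qed

lemma rus_eval:
  assumes m: "m \<ge> 1" and hol: "h holomorphic_on ball 0 1" and z: "z \<in> ball 0 1"
  shows "ruscheweyh m 0 h z = eval_fps (Ep m h) z"
proof -
  have nz: "ereal (norm z) < 1" using z by simp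
  have rz: "ereal (norm z) < fps_conv_radius (Eprime m h)"
    using nz Eprime_radius[OF hol] order.strict_trans2 by blast
  have rz2: "ereal (norm z) < fps_conv_radius (Ep m h)"
    using nz Ep_radius[OF hol] order.strict_trans2 by blast
  define g where "g = (\<lambda>k. m * Suc k + 1)"
  have sm: "strict_mono g" unfolding g_def strict_mono_def using m by auto
  have "(\<lambda>n. Eprime m h $ n * z ^ n) sums eval_fps (Eprime m h) z"
    by (rule sums_eval_fps[OF rz])
  then have "(\<lambda>k. Eprime m h $ g k * z ^ g k) sums eval_fps (Eprime m h) z"
    by (subst sums_mono_reindex[OF sm]) (auto simp: Eprime_def g_def)
  then have "(\<lambda>k. of_nat ((0 + Suc k) choose Suc k) * tcoeff h (m * Suc k + 1) * z ^ (m * Suc k + 1)) sums eval_fps (Eprime m h) z"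
    by (simp add: Eprime_def g_def)
  then have "ruscheweyh m 0 h z = z + eval_fps (Eprime m h) z"
    unfolding ruscheweyh_def by (simp add: sums_iff)
  also have "\<dots> = eval_fps (Ep m h) z"
    unfolding Ep_def using rz by (subst eval_fps_add) auto
  finally show ?thesis .
qed

lemma Ep_nth1: "m \<ge> 1 \<Longrightarrow> Ep m h $ 1 = 1"
  by (simp add: Ep_def Eprime_def)

lemma Ep_nth0: "Ep m h $ 0 = 0"
  by (simp add: Ep_def Eprime_def)

definition Pp :: "nat \<Rightarrow> real \<Rightarrow> (complex \<Rightarrow> complex) \<Rightarrow> complex fps" where
  "Pp m lam h = fps_const (1 - of_real lam) * fps_shift 1 (Ep m h) + fps_const (of_real lam) * fps_deriv (Ep m h)"

lemma Pp_radius: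
  assumes hol: "h holomorphic_on ball 0 1"
  shows "fps_conv_radius (Pp m lam h) \<ge> 1"
proof -
  have E: "fps_conv_radius (Ep m h) \<ge> 1" by (rule Ep_radius[OF hol])
  have D: "fps_conv_radius (fps_deriv (Ep m h)) \<ge> 1"
    using E fps_conv_radius_deriv order.trans by blast
  have a: "fps_conv_radius (fps_const (1 - of_real lam) * fps_shift 1 (Ep m h)) \<ge> 1"
    using fps_conv_radius_mult[of "fps_const (1 - of_real lam)" "fps_shift 1 (Ep m h)"] E
    by (simp add: order_trans)
  have b: "fps_conv_radius (fps_const (of_real lam) * fps_deriv (Ep m h)) \<ge> 1"
    using fps_conv_radius_mult[of "fps_const (of_real lam)" "fps_deriv (Ep m h)"] D
    by (simp add: order_trans)
  show ?thesis unfolding Pp_def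
    using fps_conv_radius_add[of "fps_const (1 - of_real lam) * fps_shift 1 (Ep m h)" "fps_const (of_real lam) * fps_deriv (Ep m h)"] a b
    by (meson min.boundedI order.trans)
qed

lemma Pp_nth: "Pp m lam h $ n = (1 + of_nat n * of_real lam) * Ep m h $ (n + 1)"
  by (simp add: Pp_def algebra_simps)

lemma J_eval:
  assumes m: "m \<ge> 1" and hol: "h holomorphic_on ball 0 1" and z: "z \<in> ball 0 1"
  shows "J m 1 lam 0 0 h z = eval_fps (Pp m lam h) z"
proof -
  let ?R = "ruscheweyh m 0 h"
  let ?E = "Ep m h"
  have nz: "ereal (norm z) < 1" using z by simp
  have rE: "ereal (norm z) < fps_conv_radius ?E"
    using nz Ep_radius[OF hol] order.strict_trans2 by blast
  have ev: "eventually (\<lambda>w. ?R w = eval_fps ?E w) (nhds z)"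
  proof -
    have "eventually (\<lambda>w. w \<in> ball 0 1) (nhds z)" using z by (intro eventually_nhds_in_open) auto
    then show ?thesis by eventually_elim (rule rus_eval[OF m hol])
  qed
  have dR: "deriv ?R z = eval_fps (fps_deriv ?E) z"
    using deriv_cong_ev[OF ev refl] eval_fps_deriv[OF rE] by simp
  have E0: "?E \<noteq> 0" using Ep_nth1[OF m] by (metis fps_zero_nth zero_neq_one)
  have sd: "1 \<le> subdegree ?E"
    by (rule subdegree_geI[OF E0]) (simp add: Ep_nth0)
  have divz: "divz ?R z = eval_fps (fps_shift 1 ?E) z"
  proof (cases "z = 0")
    case True
    have "deriv ?R 0 = eval_fps (fps_deriv ?E) 0" using dR True by simp
    then show ?thesis using True eval_fps_shift[OF sd rE]
      by (simp add: divz_def eval_fps_at_0)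
  next
    case False
    then show ?thesis using eval_fps_shift[OF sd rE] rus_eval[OF m hol z]
      by (simp add: divz_def)
  qed
  have rS: "ereal (norm z) < fps_conv_radius (fps_shift 1 ?E)" using rE by simp
  have rD: "ereal (norm z) < fps_conv_radius (fps_deriv ?E)"
    using rE fps_conv_radius_deriv order.strict_trans2 by blast
  have "eval_fps (Pp m lam h) z = (1 - of_real lam) * eval_fps (fps_shift 1 ?E) z + of_real lam * eval_fps (fps_deriv ?E) z"
    unfolding Pp_def
    apply (subst eval_fps_add)
    using fps_conv_radius_mult[of "fps_const (1 - of_real lam)" "fps_shift 1 ?E"]
      fps_conv_radius_mult[of "fps_const (of_real lam)" "fps_deriv ?E"] rS rD
    apply (auto intro: order.strict_trans2 simp: eval_fps_mult)
    done
  moreover have "J m 1 lam 0 0 h z = (1 - of_real lam) * divz ?R z + of_real lam * deriv ?R z"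
    unfolding J_def by (simp add: Let_def)
  ultimately show ?thesis using divz dR by simp
qed

lemma coeff_bound:
  assumes m: "m \<ge> 1" and hol: "h holomorphic_on ball 0 1"
    and pos: "\<forall>z\<in>ball 0 1. Re (J m 1 lam 0 0 h z) > beta" and n: "n \<ge> 1" and lam: "lam \<ge> 0"
  shows "(1 + real n * lam) * norm (Ep m h $ (n + 1)) \<le> 2 * (1 - beta)"
proof -
  define Q where "Q = Pp m lam h - fps_const (of_real beta)"
  have rP: "fps_conv_radius (Pp m lam h) \<ge> 1" by (rule Pp_radius[OF hol])
  have rQ: "fps_conv_radius Q \<ge> 1"
    using fps_conv_radius_diff[of "Pp m lam h" "fps_const (of_real beta)"] rP
    unfolding Q_def by (simp add: order_trans)
  have sub: "ball 0 1 \<subseteq> eball 0 (fps_conv_radius Q)"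
    using rQ by (intro ball_eball_mono) (simp add: one_ereal_def)
  have holq: "eval_fps Q holomorphic_on ball 0 1"
    by (rule holomorphic_on_eval_fps[OF sub])
  have evq: "eval_fps Q z = eval_fps (Pp m lam h) z - of_real beta" if "z \<in> ball 0 1" for z
  proof -
    have "ereal (norm z) < 1" using that by simp
    then have "ereal (norm z) < fps_conv_radius (Pp m lam h)" using rP order.strict_trans2 by blast
    then show ?thesis unfolding Q_def by (subst eval_fps_diff) auto
  qed
  have posq: "Re (eval_fps Q z) > 0" if "z \<in> ball 0 1" for z
  proof -
    have "Re (J m 1 lam 0 0 h z) > beta" using pos that by blast
    then show ?thesis using evq[OF that] J_eval[OF m hol that, of lam] by simp
  qed
  have C: "norm ((deriv ^^ n) (eval_fps Q) 0 / fact n) \<le> 2 * Re (eval_fps Q 0)"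
    by (rule carath[OF holq posq n])
  have "Q $ n = (deriv ^^ n) (eval_fps Q) 0 / fact n"
    by (rule fps_nth_conv_deriv) (use less_le_trans[OF _ rQ, of 0] in simp)
  moreover have "Q $ n = of_real (1 + real n * lam) * Ep m h $ (n + 1)"
    using n by (simp add: Q_def Pp_nth)
  moreover have "eval_fps Q 0 = of_real (1 - beta)"
    using Ep_nth1[OF m, of h] by (simp add: eval_fps_at_0 Q_def Pp_nth)
  ultimately have "norm (of_real (1 + real n * lam) * Ep m h $ (n + 1)) \<le> 2 * (1 - beta)"
    using C by simp
  moreover have "norm (of_real (1 + real n * lam) :: complex) = 1 + real n * lam"
    using lam by (simp only: norm_of_real) simp
  ultimately show ?thesis by (simp only: norm_mult)
qed


lemma binom2:
  fixes x w :: "'a::comm_ring_1"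
  shows "\<exists>Q. (x + w) ^ i = x ^ i + of_nat i * x ^ (i - 1) * w + w ^ 2 * Q"
proof (induction i)
  case 0
  show ?case by (intro exI[of _ 0]) simp
next
  case (Suc i)
  then obtain Q where Q: "(x + w) ^ i = x ^ i + of_nat i * x ^ (i - 1) * w + w ^ 2 * Q" by blast
  have xx: "x * (of_nat i * x ^ (i - 1)) = of_nat i * x ^ i"
    by (cases i) (auto simp: algebra_simps)
  show ?case
  proof (intro exI[of _ "x * Q + of_nat i * x ^ (i - 1) + w * Q"])
    have "(x + w) ^ Suc i = (x + w) * (x ^ i + of_nat i * x ^ (i - 1) * w + w ^ 2 * Q)"
      by (simp add: Q)
    also have "\<dots> = x ^ Suc i + (x * (of_nat i * x ^ (i - 1))) * w + x ^ i * w + w ^ 2 * (x * Q + of_nat i * x ^ (i - 1) + w * Q)"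
      by (simp add: algebra_simps power2_eq_square)
    also have "\<dots> = x ^ Suc i + of_nat (Suc i) * x ^ (Suc i - 1) * w + w ^ 2 * (x * Q + of_nat i * x ^ (i - 1) + w * Q)"
      by (subst xx) (simp add: algebra_simps)
    finally show "(x + w) ^ Suc i = x ^ Suc i + of_nat (Suc i) * x ^ (Suc i - 1) * w + w ^ 2 * (x * Q + of_nat i * x ^ (i - 1) + w * Q)" .
  qed
qed

lemma Fpow_nth:
  fixes F V :: "complex fps"
  assumes FV: "F = fps_X + fps_X ^ (m + 1) * V" and n: "n \<le> 2 * m + 1"
  shows "(F ^ i) $ n = (if n = i then 1 else 0) + of_nat i * (if n < i + m then 0 else V $ (n - i - m))"
proof -
  obtain Q where Q: "(fps_X + fps_X ^ (m + 1) * V) ^ i = fps_X ^ i + of_nat i * fps_X ^ (i - 1) * (fps_X ^ (m + 1) * V) + (fps_X ^ (m + 1) * V) ^ 2 * Q"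
    using binom2 by blast
  have t3: "((fps_X ^ (m + 1) * V) ^ 2 * Q) $ n = 0"
  proof -
    have e1: "(fps_X ^ (m + 1) * V) ^ 2 * Q = (fps_X ^ (m + 1)) ^ 2 * (V ^ 2 * Q)"
      by (simp only: power_mult_distrib mult.assoc)
    have e2: "((fps_X :: complex fps) ^ (m + 1)) ^ 2 = fps_X ^ (2 * m + 2)"
      by (simp only: power_mult[symmetric]) (simp add: algebra_simps)
    show ?thesis unfolding e1 e2 using n by (simp only: fps_X_power_mult_nth) simp
  qed
  have t2: "(of_nat i * fps_X ^ (i - 1) * (fps_X ^ (m + 1) * V)) $ n = of_nat i * (if n < i + m then 0 else V $ (n - i - m))"
  proof (cases i)
    case 0
    then show ?thesis by simp
  next
    case (Suc j)
    have eq: "of_nat i * fps_X ^ (i - 1) * (fps_X ^ (m + 1) * V) = of_nat i * (fps_X ^ (i + m) * V)"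
      using Suc by (simp add: power_add algebra_simps)
    show ?thesis unfolding eq fps_mult_of_nat_nth fps_X_power_mult_nth by simp
  qed
  show ?thesis using Q t2 t3 FV by (simp add: fps_X_power_nth)
qed

lemma inv_coeff:
  fixes F G :: "complex fps"
  assumes m: "m \<ge> 1" and comp: "G oo F = fps_X" and F0: "F $ 0 = 0" and F1: "F $ 1 = 1"
    and Fz: "\<And>n. n \<le> 2 * m + 1 \<Longrightarrow> n \<noteq> 1 \<Longrightarrow> n \<noteq> m + 1 \<Longrightarrow> n \<noteq> 2 * m + 1 \<Longrightarrow> F $ n = 0"
  shows "G $ (2 * m + 1) = of_nat (m + 1) * (F $ (m + 1))^2 - F $ (2 * m + 1)"
proof -
  define V where "V = Abs_fps (\<lambda>j. F $ (j + m + 1))"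
  have FV: "F = fps_X + fps_X ^ (m + 1) * V"
  proof (rule fps_ext)
    fix n
    have hx: "(fps_X ^ (m + 1) * V) $ n = (if n < m + 1 then 0 else V $ (n - (m + 1)))"
      by (rule fps_X_power_mult_nth)
    show "F $ n = (fps_X + fps_X ^ (m + 1) * V) $ n"
    proof (cases "n < m + 1")
      case True
      then show ?thesis
      proof (cases "n = 1")
        case True then show ?thesis using F1 m hx by (simp del: power_Suc)
      next
        case False
        have "F $ n = 0"
        proof (cases "n = 0")
          case True then show ?thesis using F0 by simp
        qed (use \<open>n < m + 1\<close> False in \<open>intro Fz; simp\<close>)
        then show ?thesis using \<open>n < m + 1\<close> False hx by (simp add: fps_X_nth del: power_Suc)
      qed
    next
      case False
      then show ?thesis using m hx by (simp add: fps_X_nth V_def del: power_Suc)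
    qed
  qed
  have V0: "V $ 0 = F $ (m + 1)" by (simp add: V_def)
  have Vm: "V $ m = F $ (2 * m + 1)" by (simp add: V_def mult_2)
  have Vj: "V $ j = 0" if "1 \<le> j" "j < m" for j
    unfolding V_def using that by (simp, intro Fz) auto
  define T where "T = (\<lambda>n i. G $ i * of_nat i * (if n < i + m then 0 else V $ (n - i - m)))"
  have key: "fps_X $ n = G $ n + (\<Sum>i=0..n. T n i)" if "n \<le> 2 * m + 1" for n
  proof -
    have "fps_X $ n = (G oo F) $ n" by (simp add: comp)
    also have "\<dots> = (\<Sum>i=0..n. G $ i * ((if n = i then 1 else 0) + of_nat i * (if n < i + m then 0 else V $ (n - i - m))))"
      unfolding fps_compose_nth using Fpow_nth[OF FV that] by simp
    also have "\<dots> = (\<Sum>i=0..n. (if n = i then G $ i else 0)) + (\<Sum>i=0..n. T n i)"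
      unfolding T_def sum.distrib[symmetric] by (intro sum.cong) (auto simp: algebra_simps)
    also have "(\<Sum>i=0..n. (if n = i then G $ i else 0)) = G $ n"
      by (simp add: sum.delta)
    finally show ?thesis .
  qed
  have G1: "G $ 1 = 1"
  proof -
    have "(\<Sum>i=0..1. T 1 i) = 0" using m by (simp add: T_def)
    then show ?thesis using key[of 1] m by simp
  qed
  have Gm: "G $ (m + 1) = - F $ (m + 1)"
  proof -
    have "(\<Sum>i=0..m+1. T (m+1) i) = (\<Sum>i\<in>{1}. T (m+1) i)"
      by (rule sum.mono_neutral_right) (use m in \<open>auto simp: T_def\<close>)
    also have "\<dots> = F $ (m + 1)" using G1 V0 by (simp add: T_def)
    finally show ?thesis using key[of "m + 1"] m by (simp add: fps_X_nth eq_neg_iff_add_eq_0 add.commute)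
  qed
  have "(\<Sum>i=0..2*m+1. T (2*m+1) i) = (\<Sum>i\<in>{1, m+1}. T (2*m+1) i)"
  proof (rule sum.mono_neutral_right)
    show "\<forall>i\<in>{0..2 * m + 1} - {1, m + 1}. T (2 * m + 1) i = 0"
    proof
      fix i assume i: "i \<in> {0..2 * m + 1} - {1, m + 1}"
      show "T (2 * m + 1) i = 0"
      proof (cases "i = 0 \<or> 2 * m + 1 < i + m")
        case True then show ?thesis by (auto simp: T_def)
      next
        case False
        then have "1 \<le> 2 * m + 1 - i - m" "2 * m + 1 - i - m < m" using i by auto
        then show ?thesis using False by (simp add: T_def Vj)
      qed
    qed
  qed (use m in auto)
  also have "\<dots> = T (2*m+1) 1 + T (2*m+1) (m+1)" using m by simp
  also have "\<dots> = F $ (2 * m + 1) - of_nat (m + 1) * (F $ (m + 1))^2"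
    using m G1 Gm V0 Vm by (simp add: T_def power2_eq_square algebra_simps)
  finally have "(\<Sum>i=0..2*m+1. T (2*m+1) i) = F $ (2 * m + 1) - of_nat (m + 1) * (F $ (m + 1))^2" .
  note sumeq = this
  have k: "fps_X $ (2*m+1) = G $ (2*m+1) + (\<Sum>i=0..2*m+1. T (2*m+1) i)" by (rule key) simp
  have x0: "fps_X $ (2*m+1) = (0::complex)" using m by (simp add: fps_X_nth)
  have "0 = G $ (2*m+1) + (F $ (2 * m + 1) - of_nat (m + 1) * (F $ (m + 1))^2)"
    using k[unfolded x0 sumeq] .
  then show ?thesis by (simp add: algebra_simps eq_neg_iff_add_eq_0)
qed

lemma mod_aux:
  fixes m n :: nat
  assumes m: "m \<ge> 1" and n: "2 \<le> n" "n \<le> 2 * m" "n \<noteq> m + 1"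
  shows "n mod m \<noteq> 1 mod m"
proof
  assume h: "n mod m = 1 mod m"
  have "m \<noteq> 1" using m n by auto
  then have m2: "m \<ge> 2" using m by simp
  then have "n mod m = 1" using h by simp
  moreover have "n div m \<le> 2"
    using div_le_mono[OF n(2), of m] m by simp
  moreover have "n = m * (n div m) + n mod m" by simp
  ultimately have "n = m * (n div m) + 1" by simp
  moreover have "n div m = 0 \<or> n div m = 1 \<or> n div m = 2" using \<open>n div m \<le> 2\<close> by auto
  ultimately show False using n m2 by auto
qed

lemma inv_tcoeff:
  assumes m: "m \<ge> 1" and fA: "f \<in> A_m m" and inv: "inv_extension f g"
  shows "tcoeff g (2 * m + 1) = of_nat (m + 1) * (tcoeff f (m + 1))^2 - tcoeff f (2 * m + 1)"
proof -
  have holf: "f holomorphic_on ball 0 1" and f0: "tcoeff f 0 = 0" and f1: "tcoeff f 1 = 1"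
    and fz: "\<And>n. n mod m \<noteq> 1 mod m \<Longrightarrow> tcoeff f n = 0"
    using fA by (auto simp: A_m_def)
  have holg: "g holomorphic_on ball 0 1" and ginj: "\<And>z. z \<in> ball 0 1 \<Longrightarrow> f z \<in> ball 0 1 \<Longrightarrow> g (f z) = z"
    using inv by (auto simp: inv_extension_def)
  define F where "F = fps_expansion f 0"
  define G where "G = fps_expansion g 0"
  have Fn: "F $ n = tcoeff f n" for n by (simp add: F_def fps_expansion_def tcoeff_def)
  have Gn: "G $ n = tcoeff g n" for n by (simp add: G_def fps_expansion_def tcoeff_def)
  have Fe: "f has_fps_expansion F" unfolding F_def
    by (rule has_fps_expansion_fps_expansion[OF open_ball _ holf]) simp
  have Ge: "g has_fps_expansion G" unfolding G_def
    by (rule has_fps_expansion_fps_expansion[OF open_ball _ holg]) simp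
  have c: "(g \<circ> f) has_fps_expansion (G oo F)"
    by (rule has_fps_expansion_compose[OF Ge Fe]) (simp add: Fn f0)
  have fzero: "f 0 = 0" using f0 by (simp add: tcoeff_def)
  have "open (ball 0 1 \<inter> f -` ball 0 1)"
    by (rule continuous_open_preimage[OF holomorphic_on_imp_continuous_on[OF holf]]) auto
  moreover have "0 \<in> ball 0 1 \<inter> f -` ball 0 1" using fzero by simp
  ultimately have "eventually (\<lambda>z. z \<in> ball 0 1 \<inter> f -` ball 0 1) (nhds 0)"
    by (rule eventually_nhds_in_open)
  then have ev: "eventually (\<lambda>z. (g \<circ> f) z = z) (nhds 0)"
    by eventually_elim (use ginj in auto)
  have "(\<lambda>z. z) has_fps_expansion (G oo F)"
    using c has_fps_expansion_cong[OF ev refl] by simp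
  then have comp: "G oo F = fps_X"
    using fps_expansion_unique_complex has_fps_expansion_fps_X by blast
  have "G $ (2 * m + 1) = of_nat (m + 1) * (F $ (m + 1))^2 - F $ (2 * m + 1)"
  proof (rule inv_coeff[OF m comp])
    show "F $ 0 = 0" by (simp add: Fn f0)
    show "F $ 1 = 1" using f1 by (simp only: Fn)
    fix n assume n: "n \<le> 2 * m + 1" "n \<noteq> 1" "n \<noteq> m + 1" "n \<noteq> 2 * m + 1"
    show "F $ n = 0"
    proof (cases "n = 0")
      case True then show ?thesis by (simp add: Fn f0)
    next
      case False
      then have "n mod m \<noteq> 1 mod m" using n m by (intro mod_aux) auto
      then show ?thesis by (simp add: Fn fz)
    qed
  qed
  then show ?thesis by (simp add: Fn Gn)
qed


lemma Ep_nth_coeff: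
  assumes "m \<ge> 1"
  shows "Ep m h $ (m * Suc k + 1) = tcoeff h (m * Suc k + 1)"
  using assms by (auto simp: Ep_def Eprime_def)

theorem corollary3:
  fixes m :: nat and lam beta :: real and f :: "complex \<Rightarrow> complex"
  assumes "m \<ge> 1" and "lam \<ge> 0" and "0 \<le> beta" and "beta < 1"
    and "f \<in> Theta m 1 lam 0 0 beta"
  shows "norm (tcoeff f (m + 1)) \<le>
           min (2 * (1 - beta) / (1 + m * lam))
               (2 * sqrt ((1 - beta) / ((m + 1) * (1 + 2 * m * lam)))) \<and>
         norm (tcoeff f (2 * m + 1)) \<le> 2 * (1 - beta) / (1 + 2 * m * lam)"
proof -
  note m = assms(1) and lam = assms(2)
  have fS: "f \<in> Sigma_m m" and posf: "\<forall>z\<in>ball 0 1. Re (J m 1 lam 0 0 f z) > beta"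
    and posg: "\<And>g. inv_extension f g \<Longrightarrow> \<forall>w\<in>ball 0 1. Re (J m 1 lam 0 0 g w) > beta"
    using assms(5) by (auto simp: Theta_def)
  have fA: "f \<in> A_m m" using fS by (simp add: Sigma_m_def)
  obtain g where inv: "inv_extension f g" using fS by (auto simp: Sigma_m_def)
  have holf: "f holomorphic_on ball 0 1" using fA by (simp add: A_m_def)
  have holg: "g holomorphic_on ball 0 1" using inv by (simp add: inv_extension_def)
  define a where "a = tcoeff f (m + 1)"
  define c where "c = tcoeff f (2 * m + 1)"
  define b where "b = tcoeff g (2 * m + 1)"
  have i1: "m + 1 = m * Suc 0 + 1" by simp
  have i2: "2 * m + 1 = m * Suc 1 + 1" by simp
  have Efa: "Ep m f $ (m + 1) = a" unfolding a_def i1 by (rule Ep_nth_coeff[OF m])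
  have Efc: "Ep m f $ (2 * m + 1) = c" unfolding c_def i2 by (rule Ep_nth_coeff[OF m])
  have Egb: "Ep m g $ (2 * m + 1) = b" unfolding b_def i2 by (rule Ep_nth_coeff[OF m])
  have b1: "(1 + real m * lam) * norm a \<le> 2 * (1 - beta)"
    using coeff_bound[OF m holf posf m lam] Efa by simp
  have b2: "(1 + real (2 * m) * lam) * norm c \<le> 2 * (1 - beta)"
    using coeff_bound[OF m holf posf _ lam, of "2 * m"] Efc m by simp
  have b3: "(1 + real (2 * m) * lam) * norm b \<le> 2 * (1 - beta)"
    using coeff_bound[OF m holg posg[OF inv] _ lam, of "2 * m"] Egb m by simp
  have bab: "b = of_nat (m + 1) * a^2 - c"
    unfolding a_def b_def c_def by (rule inv_tcoeff[OF m fA inv])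
  have "of_nat (m + 1) * a^2 = b + c" using bab by simp
  then have "real (m + 1) * norm a ^ 2 \<le> norm b + norm c"
    by (metis norm_triangle_ineq norm_mult norm_of_nat norm_power)
  then have sq: "(1 + real (2 * m) * lam) * (real (m + 1) * norm a ^ 2) \<le> 4 * (1 - beta)"
    using b2 b3 lam
    by (smt (verit, best) distrib_left mult_left_mono of_nat_0_le_iff zero_le_mult_iff)
  have p1: "0 < 1 + real m * lam" using lam by (simp add: add_pos_nonneg)
  have p2: "0 < 1 + 2 * real m * lam" using lam by (simp add: add_pos_nonneg)
  have A1: "norm a \<le> 2 * (1 - beta) / (1 + real m * lam)"
    using b1 p1 by (simp add: pos_le_divide_eq mult.commute)
  have A2: "norm c \<le> 2 * (1 - beta) / (1 + 2 * real m * lam)"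
    using b2 p2 by (simp add: pos_le_divide_eq mult.commute mult.assoc)
  have "norm a ^ 2 \<le> 4 * ((1 - beta) / ((real m + 1) * (1 + 2 * real m * lam)))"
  proof -
    have D: "0 < (real m + 1) * (1 + 2 * real m * lam)" using p2 by simp
    have "norm a ^ 2 * ((real m + 1) * (1 + 2 * real m * lam)) \<le> 4 * (1 - beta)"
      using sq by (simp add: algebra_simps)
    then have "norm a ^ 2 \<le> 4 * (1 - beta) / ((real m + 1) * (1 + 2 * real m * lam))"
      using D by (simp add: pos_le_divide_eq)
    then show ?thesis by simp
  qed
  then have "norm a \<le> sqrt (4 * ((1 - beta) / ((real m + 1) * (1 + 2 * real m * lam))))"
    by (rule real_le_rsqrt)
  also have "\<dots> = 2 * sqrt ((1 - beta) / ((real m + 1) * (1 + 2 * real m * lam)))"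
    by (simp only: real_sqrt_mult) (simp add: real_sqrt_four)
  finally have A3: "norm a \<le> 2 * sqrt ((1 - beta) / ((real m + 1) * (1 + 2 * real m * lam)))" .
  show ?thesis using A1 A2 A3 unfolding a_def c_def by (simp add: add.commute)
qed

end
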